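(* Let $A=(a_{i,j})$ be a symmetric $n\times n$ matrix with nonnegative entries (the weighted adjacency matrix of an undirected graph, self-loops allowed) with $\deg(i)=\sum_{j=1}^n a_{i,j}>0$ for all $i$. For each $i$ let $h_i:[0,1]\to[0,1]$ be a bijective, monotonically increasing function, and define $F:[0,1]^n\to[0,1]^n$ by $F_i(\beta)=h_i(\mu_i)$ with $\mu_i=\frac{1}{\deg(i)}\sum_{j=1}^n a_{i,j}\beta_j$. Then there exists a differentiable function $V:[0,1]^n\to\mathbb{R}$ with $V\ge 0$ such that for all $\beta\in[0,1]^n$, $$\langle F(\beta)-\beta,\nabla V(\beta)\rangle\le 0,$$ with equality if and only if $F(\beta)=\beta$.
   Context: In the paper $h_i=h(\cdot,\gamma_i)$ for a family of functions indexed by parameters $\gamma_i$. *)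

theory Defs
  imports "HOL-Analysis.Analysis"
begin

definition unit_cube :: "(real ^ 'n) set" where
  "unit_cube = {\<beta>. \<forall>i. 0 \<le> \<beta> $ i \<and> \<beta> $ i \<le> 1}"

definition wdeg :: "real ^ 'n ^ 'n \<Rightarrow> 'n \<Rightarrow> real" where
  "wdeg A i = (\<Sum>j\<in>UNIV. A $ i $ j)"

definition dynF :: "real ^ 'n ^ 'n \<Rightarrow> ('n \<Rightarrow> real \<Rightarrow> real) \<Rightarrow> real ^ 'n \<Rightarrow> real ^ 'n" where
  "dynF A h \<beta> = (\<chi> i. h i ((\<Sum>j\<in>UNIV. A $ i $ j * \<beta> $ j) / wdeg A i))"

end

theory Submission imports Defs begin

lemma inv_props:
  fixes h :: "real \<Rightarrow> real"
  assumes bij: "bij_betw h {0..1} {0..1}" and mono: "mono_on {0..1} h"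
  defines "g \<equiv> inv_into {0..1} h"
  shows "continuous_on {0..1} g"
    and "\<And>x. x \<in> {0..1} \<Longrightarrow> g x \<in> {0..1}"
    and "\<And>x. x \<in> {0..1} \<Longrightarrow> h (g x) = x"
    and "\<And>x. x \<in> {0..1} \<Longrightarrow> g (h x) = x"
    and "\<And>x y. x \<in> {0..1} \<Longrightarrow> y \<in> {0..1} \<Longrightarrow> x < y \<Longrightarrow> g x < g y"
proof -
  have inj: "inj_on h {0..1}" and im: "h ` {0..1} = {0..1}" using bij by (auto simp: bij_betw_def)
  show gin: "\<And>x. x \<in> {0..1} \<Longrightarrow> g x \<in> {0..1}"
    unfolding g_def by (metis im inv_into_into)
  show hg: "\<And>x. x \<in> {0..1} \<Longrightarrow> h (g x) = x"
    unfolding g_def by (metis im f_inv_into_f)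
  show gh: "\<And>x. x \<in> {0..1} \<Longrightarrow> g (h x) = x"
    unfolding g_def using inj by (simp add: inv_into_f_f)
  have gmono: "g x \<le> g y" if "x \<in> {0..1}" "y \<in> {0..1}" "x \<le> y" for x y
  proof (rule ccontr)
    assume "\<not> g x \<le> g y"
    then have "g y \<le> g x" by simp
    then have "h (g y) \<le> h (g x)" using mono gin that by (auto intro: mono_onD)
    then have "y \<le> x" using hg that by simp
    then have "x = y" using that by simp
    then show False using \<open>\<not> g x \<le> g y\<close> by simp
  qed
  show "\<And>x y. x \<in> {0..1} \<Longrightarrow> y \<in> {0..1} \<Longrightarrow> x < y \<Longrightarrow> g x < g y"
    by (metis gmono hg order_less_le)
  define ge where "ge x = (if x < 0 then x else if x > 1 then x else g x)" for x
  have "ge ` UNIV = UNIV"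
  proof safe
    fix y :: real
    show "y \<in> range ge"
    proof (cases "y < 0 \<or> y > 1")
      case True then show ?thesis by (intro image_eqI[of _ _ y]) (auto simp: ge_def)
    next
      case False
      then have "h y \<in> {0..1}" using im by auto
      then have "ge (h y) = y" using gh False by (auto simp: ge_def)
      then show ?thesis by (metis rangeI)
    qed
  qed auto
  moreover have "ge x \<le> ge y" if "x \<le> y" for x y
    using that gmono[of x y] gin[of x] gin[of y] by (auto simp: ge_def)
  ultimately have "continuous_on UNIV ge"
    by (intro continuous_onI_mono) auto
  then have "continuous_on {0..1} ge" by (rule continuous_on_subset) auto
  then show "continuous_on {0..1} g"
    by (rule continuous_on_cong[THEN iffD1, rotated 2]) (auto simp: ge_def)
qed


lemma sign_lemma:
  fixes h :: "real \<Rightarrow> real"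
  assumes bij: "bij_betw h {0..1} {0..1}" and mono: "mono_on {0..1} h"
    and b: "b \<in> {0..1}" and m: "m \<in> {0..1}" and d: "d > 0"
  shows "(h m - b) * (d * inv_into {0..1} h b - d * m) \<le> 0"
    and "(h m - b) * (d * inv_into {0..1} h b - d * m) = 0 \<longleftrightarrow> h m = b"
proof -
  let ?g = "inv_into {0..1} h"
  note P = inv_props[OF bij mono]
  have hm: "h m \<in> {0..1}" using bij m by (auto simp: bij_betw_def)
  have "(h m > b \<and> ?g b < m) \<or> (h m < b \<and> ?g b > m) \<or> h m = b"
  proof -
    { assume "h m > b" then have "?g b < ?g (h m)" using P(5)[OF b hm] by simp
      then have "?g b < m" using P(4)[OF m] by simp }
    moreover
    { assume "h m < b" then have "?g (h m) < ?g b" using P(5)[OF hm b] by simp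
      then have "?g b > m" using P(4)[OF m] by simp }
    ultimately show ?thesis by linarith
  qed
  moreover have "d * ?g b - d * m = d * (?g b - m)" by (simp add: algebra_simps)
  moreover have "(h m - b) * (d * (?g b - m)) < 0" if "h m > b" "?g b < m"
  proof -
    have "d * (?g b - m) < 0" using d that by (simp add: mult_pos_neg)
    then show ?thesis using that by (simp add: mult_pos_neg)
  qed
  moreover have "(h m - b) * (d * (?g b - m)) < 0" if "h m < b" "?g b > m"
  proof -
    have "d * (?g b - m) > 0" using d that by simp
    then show ?thesis using that by (simp add: mult_neg_pos)
  qed
  ultimately show "(h m - b) * (d * ?g b - d * m) \<le> 0"
    and "(h m - b) * (d * ?g b - d * m) = 0 \<longleftrightarrow> h m = b"
    by auto
qed

lemma comp_deriv:
  fixes G g :: "real \<Rightarrow> real" and \<beta> :: "real ^ 'n"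
  assumes "\<And>t. t \<in> {0..1} \<Longrightarrow> (G has_real_derivative g t) (at t within {0..1})"
    and "\<beta> \<in> unit_cube"
  shows "((\<lambda>\<beta>. G (\<beta> $ i)) has_derivative (\<lambda>v. g (\<beta> $ i) * v $ i)) (at \<beta> within unit_cube)"
proof -
  have bi: "\<beta> $ i \<in> {0..1}" using assms(2) by (auto simp: unit_cube_def)
  have img: "(\<lambda>\<beta>. \<beta> $ i) ` unit_cube \<subseteq> {0..1}" by (auto simp: unit_cube_def)
  have d1: "((\<lambda>\<beta>. \<beta> $ i) has_derivative (\<lambda>v. v $ i)) (at \<beta> within unit_cube)"
    by (rule bounded_linear_imp_has_derivative) (rule bounded_linear_vec_nth)
  have d2: "(G has_derivative (*) (g (\<beta> $ i))) (at (\<beta> $ i) within (\<lambda>\<beta>. \<beta> $ i) ` unit_cube)"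
    using has_derivative_subset[OF assms(1)[OF bi, unfolded has_field_derivative_def] img]
    by simp
  from diff_chain_within[OF d1 d2] show ?thesis by (simp add: o_def mult.commute)
qed

theorem theorem1:
  fixes A :: "real ^ 'n ^ 'n" and h :: "'n \<Rightarrow> real \<Rightarrow> real"
  assumes symm: "\<And>i j. A $ i $ j = A $ j $ i"
    and nonneg: "\<And>i j. 0 \<le> A $ i $ j"
    and deg_pos: "\<And>i. wdeg A i > 0"
    and h_bij: "\<And>i. bij_betw (h i) {0..1} {0..1}"
    and h_mono: "\<And>i. mono_on {0..1} (h i)"
  shows "\<exists>(V :: real ^ 'n \<Rightarrow> real) (gradV :: real ^ 'n \<Rightarrow> real ^ 'n).
           (\<forall>\<beta>\<in>unit_cube. (V has_derivative (\<lambda>v. gradV \<beta> \<bullet> v)) (at \<beta> within unit_cube)) \<and>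
           (\<forall>\<beta>\<in>unit_cube. 0 \<le> V \<beta>) \<and>
           (\<forall>\<beta>\<in>unit_cube. (dynF A h \<beta> - \<beta>) \<bullet> gradV \<beta> \<le> 0 \<and>
                ((dynF A h \<beta> - \<beta>) \<bullet> gradV \<beta> = 0 \<longleftrightarrow> dynF A h \<beta> = \<beta>))"
proof -
  define g where "g i = inv_into {0..1} (h i)" for i
  define G where "G i x = integral {0..x} (g i)" for i x
  define d where "d i = wdeg A i" for i
  define V where "V \<beta> = (\<Sum>i\<in>UNIV. d i * G i (\<beta> $ i))
      - (\<Sum>i\<in>UNIV. \<Sum>j\<in>UNIV. A $ i $ j * (\<beta> $ i * \<beta> $ j)) / 2
      + (\<Sum>i\<in>UNIV. \<Sum>j\<in>UNIV. A $ i $ j) / 2" for \<beta> :: "real ^ 'n"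
  define gradV where "gradV \<beta> = (\<chi> i. d i * g i (\<beta> $ i) - (\<Sum>j\<in>UNIV. A $ i $ j * \<beta> $ j))"
    for \<beta> :: "real ^ 'n"
  have gcont: "continuous_on {0..1} (g i)" for i
    unfolding g_def by (rule inv_props(1)[OF h_bij h_mono])
  have gin: "x \<in> {0..1} \<Longrightarrow> g i x \<in> {0..1}" for i x
    unfolding g_def by (rule inv_props(2)[OF h_bij h_mono])
  have Gd: "(G i has_real_derivative g i t) (at t within {0..1})" if "t \<in> {0..1}" for i t
    unfolding G_def using integral_has_real_derivative[OF gcont that] .
  have cube: "\<beta> $ i \<in> {0..1}" if "\<beta> \<in> unit_cube" for \<beta> :: "real ^ 'n" and i
    using that by (auto simp: unit_cube_def)
  have swap: "(\<Sum>i\<in>UNIV. \<Sum>j\<in>UNIV. A $ i $ j * (\<beta> $ i * v $ j))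
      = (\<Sum>i\<in>UNIV. \<Sum>j\<in>UNIV. A $ i $ j * (v $ i * \<beta> $ j))" for \<beta> v :: "real ^ 'n"
    by (subst sum.swap) (simp add: symm mult.commute mult.left_commute)
  have deriv: "(V has_derivative (\<lambda>v. gradV \<beta> \<bullet> v)) (at \<beta> within unit_cube)"
    if b: "\<beta> \<in> unit_cube" for \<beta>
  proof -
    have dG: "((\<lambda>\<beta>. G i (\<beta> $ i)) has_derivative (\<lambda>v. g i (\<beta> $ i) * v $ i)) (at \<beta> within unit_cube)" for i
      by (rule comp_deriv[OF Gd b])
    have dn: "((\<lambda>\<beta>. \<beta> $ i) has_derivative (\<lambda>v. v $ i)) (at \<beta> within unit_cube)" for i
      by (rule bounded_linear_imp_has_derivative) (rule bounded_linear_vec_nth)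
    have d1: "((\<lambda>\<beta>. \<Sum>i\<in>UNIV. d i * G i (\<beta> $ i)) has_derivative
        (\<lambda>v. \<Sum>i\<in>UNIV. d i * (g i (\<beta> $ i) * v $ i))) (at \<beta> within unit_cube)"
      by (intro has_derivative_sum has_derivative_mult_right dG)
    have d2: "((\<lambda>\<beta>. \<Sum>i\<in>UNIV. \<Sum>j\<in>UNIV. A $ i $ j * (\<beta> $ i * \<beta> $ j)) has_derivative
        (\<lambda>v. \<Sum>i\<in>UNIV. \<Sum>j\<in>UNIV. A $ i $ j * (\<beta> $ i * v $ j + v $ i * \<beta> $ j))) (at \<beta> within unit_cube)"
      by (intro has_derivative_sum has_derivative_mult_right has_derivative_mult dn)
    have d3: "(V has_derivative (\<lambda>v. (\<Sum>i\<in>UNIV. d i * (g i (\<beta> $ i) * v $ i))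
        - (\<Sum>i\<in>UNIV. \<Sum>j\<in>UNIV. A $ i $ j * (\<beta> $ i * v $ j + v $ i * \<beta> $ j)) / 2 + 0))
        (at \<beta> within unit_cube)"
      unfolding V_def
      by (intro has_derivative_add has_derivative_diff d1 bounded_linear.has_derivative[OF bounded_linear_divide d2] has_derivative_const)
    show ?thesis
    proof (rule has_derivative_eq_rhs[OF d3], rule ext)
      fix v :: "real ^ 'n"
      have "(\<Sum>i\<in>UNIV. \<Sum>j\<in>UNIV. A $ i $ j * (\<beta> $ i * v $ j + v $ i * \<beta> $ j))
          = (\<Sum>i\<in>UNIV. \<Sum>j\<in>UNIV. A $ i $ j * (\<beta> $ i * v $ j))
           + (\<Sum>i\<in>UNIV. \<Sum>j\<in>UNIV. A $ i $ j * (v $ i * \<beta> $ j))"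
        by (simp add: distrib_left sum.distrib)
      also have "\<dots> = 2 * (\<Sum>i\<in>UNIV. v $ i * (\<Sum>j\<in>UNIV. A $ i $ j * \<beta> $ j))"
        unfolding swap[of \<beta> v] by (simp add: sum_distrib_left mult.commute mult.left_commute)
      finally show "(\<Sum>i\<in>UNIV. d i * (g i (\<beta> $ i) * v $ i))
        - (\<Sum>i\<in>UNIV. \<Sum>j\<in>UNIV. A $ i $ j * (\<beta> $ i * v $ j + v $ i * \<beta> $ j)) / 2 + 0
        = gradV \<beta> \<bullet> v"
        by (simp add: gradV_def inner_vec_def algebra_simps sum_subtractf sum_distrib_left)
    qed
  qed
  have nonneg_V: "0 \<le> V \<beta>" if b: "\<beta> \<in> unit_cube" for \<beta>
  proof -
    have "0 \<le> G i (\<beta> $ i)" for i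
      unfolding G_def
    proof (rule integral_nonneg)
      have "continuous_on {0..\<beta> $ i} (g i)"
        using gcont by (rule continuous_on_subset) (use cube[OF b, of i] in auto)
      then show "g i integrable_on {0..\<beta> $ i}" by (rule integrable_continuous_real)
      show "0 \<le> g i x" if "x \<in> {0..\<beta> $ i}" for x
        using gin[of x i] that cube[OF b, of i] by auto
    qed
    then have "0 \<le> (\<Sum>i\<in>UNIV. d i * G i (\<beta> $ i))"
      using deg_pos by (intro sum_nonneg) (simp add: d_def less_imp_le)
    moreover have "(\<Sum>i\<in>UNIV. \<Sum>j\<in>UNIV. A $ i $ j * (\<beta> $ i * \<beta> $ j)) \<le> (\<Sum>i\<in>UNIV. \<Sum>j\<in>UNIV. A $ i $ j)"
    proof (intro sum_mono)
      fix i j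
      have "\<beta> $ i * \<beta> $ j \<le> 1" using cube[OF b, of i] cube[OF b, of j]
        by (simp add: mult_le_one)
      then show "A $ i $ j * (\<beta> $ i * \<beta> $ j) \<le> A $ i $ j"
        using nonneg[of i j] by (simp add: mult_left_le)
    qed
    ultimately show ?thesis unfolding V_def by linarith
  qed
  have sgn: "(dynF A h \<beta> - \<beta>) \<bullet> gradV \<beta> \<le> 0 \<and>
                ((dynF A h \<beta> - \<beta>) \<bullet> gradV \<beta> = 0 \<longleftrightarrow> dynF A h \<beta> = \<beta>)"
    if b: "\<beta> \<in> unit_cube" for \<beta>
  proof -
    define \<mu> where "\<mu> i = (\<Sum>j\<in>UNIV. A $ i $ j * \<beta> $ j) / wdeg A i" for i
    have mu: "\<mu> i \<in> {0..1}" for i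
    proof -
      have "0 \<le> (\<Sum>j\<in>UNIV. A $ i $ j * \<beta> $ j)"
        using nonneg cube[OF b] by (intro sum_nonneg) auto
      moreover have "(\<Sum>j\<in>UNIV. A $ i $ j * \<beta> $ j) \<le> wdeg A i"
        unfolding wdeg_def using nonneg cube[OF b]
        by (intro sum_mono) (simp add: mult_left_le)
      ultimately show ?thesis using deg_pos[of i] by (simp add: \<mu>_def)
    qed
    have eq: "(\<Sum>j\<in>UNIV. A $ i $ j * \<beta> $ j) = d i * \<mu> i" for i
      using deg_pos[of i] by (simp add: \<mu>_def d_def)
    define t where "t i = (h i (\<mu> i) - \<beta> $ i) * (d i * inv_into {0..1} (h i) (\<beta> $ i) - d i * \<mu> i)" for i
    have ip: "(dynF A h \<beta> - \<beta>) \<bullet> gradV \<beta> = (\<Sum>i\<in>UNIV. t i)"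
    proof -
      have dyn: "dynF A h \<beta> = (\<chi> i. h i (\<mu> i))" by (simp add: dynF_def \<mu>_def)
      show ?thesis by (simp add: inner_vec_def dyn gradV_def t_def g_def eq)
    qed
    have t1: "t i \<le> 0" for i
      unfolding t_def by (rule sign_lemma(1)[OF h_bij h_mono cube[OF b] mu]) (simp add: d_def deg_pos)
    have t2: "t i = 0 \<longleftrightarrow> h i (\<mu> i) = \<beta> $ i" for i
      unfolding t_def by (rule sign_lemma(2)[OF h_bij h_mono cube[OF b] mu]) (simp add: d_def deg_pos)
    have "(\<Sum>i\<in>UNIV. t i) \<le> 0" using t1 by (simp add: sum_nonpos)
    moreover have "(\<Sum>i\<in>UNIV. t i) = 0 \<longleftrightarrow> (\<forall>i. t i = 0)"
      using sum_nonneg_eq_0_iff[of UNIV "\<lambda>i. - t i"] t1 by (simp add: sum_negf)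
    moreover have "dynF A h \<beta> = \<beta> \<longleftrightarrow> (\<forall>i. h i (\<mu> i) = \<beta> $ i)"
      by (simp add: vec_eq_iff dynF_def \<mu>_def)
    ultimately show ?thesis using ip t2 by simp
  qed
  show ?thesis
    by (rule exI[of _ V], rule exI[of _ gradV]) (use deriv nonneg_V sgn in blast)
qed

end
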